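(* Let $X,Y$ be $\mathbb{Q}$-vector spaces and let $f:X\to Y$. Suppose $X$ carries a topology $\tau_X$ such that every neighborhood of the origin is naturally absorbent. Let $B$ be a neighborhood of the origin and $s\ge1$. If $\Delta_{h_1h_2\cdots h_s}f(x)=0$ for all $x\in X$ and all $h_1,\dots,h_s\in B$, then $\Delta_{h_1h_2\cdots h_s}f(x)=0$ for all $(x,h_1,\dots,h_s)\in X^{s+1}$.
   Context: A set $B\subseteq X$ is called naturally absorbent if for each $x\in X$ there exists $k\in\mathbb{N}$ with $x\in kB=\{kz:z\in B\}$. For $h\in X$, $\Delta_hf(x)=f(x+h)-f(x)$ and $\Delta_{h_1h_2\cdots h_s}f(x)=\Delta_{h_1}\left(\Delta_{h_2\cdots h_s}f\right)(x)$ for $s\ge 2$. *)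

theory Defs
  imports "HOL-Analysis.Analysis"
begin

definition naturally_absorbent :: "(rat \<Rightarrow> 'x \<Rightarrow> 'x) \<Rightarrow> 'x set \<Rightarrow> bool" where
  "naturally_absorbent sc B \<longleftrightarrow> (\<forall>x. \<exists>k::nat. x \<in> (\<lambda>z. sc (of_nat k) z) ` B)"

definition diff_op :: "'x::ab_group_add \<Rightarrow> ('x \<Rightarrow> 'y::ab_group_add) \<Rightarrow> 'x \<Rightarrow> 'y" where
  "diff_op h f x = f (x + h) - f x"

fun diffs :: "'x::ab_group_add list \<Rightarrow> ('x \<Rightarrow> 'y::ab_group_add) \<Rightarrow> 'x \<Rightarrow> 'y" where
  "diffs [] f = f"
| "diffs (h # hs) f = diff_op h (diffs hs f)"

definition nhd0 :: "'x::zero topology \<Rightarrow> 'x set \<Rightarrow> bool" where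
  "nhd0 T B \<longleftrightarrow> (\<exists>U. openin T U \<and> 0 \<in> U \<and> U \<subseteq> B)"

end

theory Submission
  imports Defs
begin

lemma diffs_append: "diffs (ps @ qs) f = diffs ps (diffs qs f)"
  by (induction ps) auto

lemma diffs_shift: "diffs ps (\<lambda>y. g (y + a)) = (\<lambda>x. diffs ps g (x + a))"
  by (induction ps) (auto simp: diff_op_def algebra_simps)

lemma diffs_add: "diffs ps (\<lambda>y. u y + v y) = (\<lambda>x. diffs ps u x + diffs ps v x)"
  by (induction ps) (auto simp: diff_op_def algebra_simps)

lemma diffs_zero: "diffs ps (\<lambda>_. 0) = (\<lambda>_. 0)"
  by (induction ps) (auto simp: diff_op_def)

lemma diffs_split_add:
  "diffs (ps @ (a + b) # qs) f x = diffs (ps @ a # qs) f x + diffs (ps @ b # qs) f (x + a)"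
proof -
  let ?g = "diffs qs f"
  have "diff_op (a + b) ?g = (\<lambda>y. diff_op a ?g y + diff_op b ?g (y + a))"
    by (auto simp: diff_op_def algebra_simps)
  hence "diffs (ps @ (a + b) # qs) f x = diffs ps (\<lambda>y. diff_op a ?g y + diff_op b ?g (y + a)) x"
    by (simp add: diffs_append)
  also have "\<dots> = diffs ps (diff_op a ?g) x + diffs ps (\<lambda>y. diff_op b ?g (y + a)) x"
    by (simp add: diffs_add)
  also have "\<dots> = diffs (ps @ a # qs) f x + diffs (ps @ b # qs) f (x + a)"
    by (simp add: diffs_shift diffs_append)
  finally show ?thesis .
qed

lemma diffs_zero_step: "diffs (ps @ 0 # qs) f x = 0"
proof -
  have "diff_op 0 (diffs qs f) = (\<lambda>_. 0)" by (auto simp: diff_op_def)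
  thus ?thesis by (simp add: diffs_append diffs_zero)
qed

theorem theorem4:
  fixes scX :: "rat \<Rightarrow> 'x::ab_group_add \<Rightarrow> 'x"
    and scY :: "rat \<Rightarrow> 'y::ab_group_add \<Rightarrow> 'y"
    and T :: "'x topology"
    and f :: "'x \<Rightarrow> 'y"
    and B :: "'x set"
    and s :: nat
  assumes "vector_space scX" and "vector_space scY"
    and "topspace T = UNIV"
    and "\<And>V. nhd0 T V \<Longrightarrow> naturally_absorbent scX V"
    and "nhd0 T B"
    and "s \<ge> 1"
    and "\<And>hs x. length hs = s \<Longrightarrow> set hs \<subseteq> B \<Longrightarrow> diffs hs f x = 0"
  shows "\<forall>hs x. length hs = s \<longrightarrow> diffs hs f x = 0"
proof -
  interpret V: vector_space scX by fact
  have abs: "naturally_absorbent scX B" using assms(4,5) by blast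
  have sc: "scX (of_nat (Suc k)) z = scX (of_nat k) z + z" for k z
    by (simp add: V.scale_left_distrib)
  have sc0: "scX 0 z = 0" for z by simp
  have S: "\<forall>ps qs x. length ps = n \<longrightarrow> length ps + length qs = s \<longrightarrow> set qs \<subseteq> B
            \<longrightarrow> diffs (ps @ qs) f x = 0" for n
  proof (induction n)
    case 0
    then show ?case using assms(7) by auto
  next
    case (Suc n)
    show ?case
    proof (intro allI impI)
      fix ps' qs' :: "'x list" and x :: 'x
      assume l: "length ps' = Suc n" "length ps' + length qs' = s" "set qs' \<subseteq> B"
      obtain ps h where ps': "ps' = ps @ [h]" using l(1)
        by (metis length_Suc_conv_rev)
      have lp: "length ps = n" using l(1) ps' by simp
      obtain k z where hz: "h = scX (of_nat k) z" "z \<in> B"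
        using abs unfolding naturally_absorbent_def by blast
      have zB: "\<forall>y. diffs (ps @ z # qs') f y = 0"
        using Suc.IH lp l ps' hz(2) by auto
      have "\<forall>y. diffs (ps @ scX (of_nat k) z # qs') f y = 0"
      proof (induction k)
        case 0
        then show ?case by (simp add: sc0 diffs_zero_step)
      next
        case (Suc k)
        then show ?case using zB by (simp only: sc diffs_split_add) simp
      qed
      thus "diffs (ps' @ qs') f x = 0" using ps' hz by simp
    qed
  qed
  show ?thesis
  proof (intro allI impI)
    fix hs :: "'x list" and x :: 'x assume "length hs = s"
    thus "diffs hs f x = 0" using S[of s] by (metis append.right_neutral add_0_right empty_subsetI list.size(3) set_empty)
  qed
qed

end
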